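(* Let $\Bbbk$ be a field, $S=\Bbbk[x_1,x_2,x_3]$, let $d\geq 5$ with $d\neq 6$, and let $I=(x_1^d,x_2^d,x_3^d,x_1^{\lfloor d/2\rfloor}x_2^{\lceil d/2\rceil})$. Then $$\mathrm{HF}\left(S/I, \left\lfloor\tfrac{3d-3}{2}\right\rfloor -1 \right)>\mathrm{HF}\left(S/I,\left\lfloor\tfrac{3d-3}{2}\right\rfloor \right).$$
   Context: $\mathrm{HF}(A,k)=\dim_\Bbbk A_k$ denotes the Hilbert function of the graded algebra $A$. *)

theory Defs
  imports Complex_Main "HOL-Library.Poly_Mapping" "HOL-Library.Numeral_Type"
begin

text \<open>The polynomial ring S = k[x_1,x_2,x_3]: finitely supported maps from exponent
  vectors (indexed by the 3-element type 3) to coefficients in the field k.\<close>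

type_synonym 'k poly3 = "(3 \<Rightarrow>\<^sub>0 nat) \<Rightarrow>\<^sub>0 'k"

text \<open>Variable x_i (i = 0,1,2 stands for x_1,x_2,x_3).\<close>
definition var3 :: "3 \<Rightarrow> 'k::field poly3" where
  "var3 i = Poly_Mapping.single (Poly_Mapping.single i 1) 1"

definition scale3 :: "'k::field \<Rightarrow> 'k poly3 \<Rightarrow> 'k poly3" where
  "scale3 c p = Poly_Mapping.single 0 c * p"

definition mdeg :: "(3 \<Rightarrow>\<^sub>0 nat) \<Rightarrow> nat" where
  "mdeg m = (\<Sum>i\<in>Poly_Mapping.keys m. Poly_Mapping.lookup m i)"

definition homog :: "nat \<Rightarrow> 'k::field poly3 set" where
  "homog k = {p. \<forall>m\<in>Poly_Mapping.keys p. mdeg m = k}"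

definition ideal_gen :: "'k::field poly3 list \<Rightarrow> 'k poly3 set" where
  "ideal_gen gs = {p. \<exists>c. p = (\<Sum>j<length gs. c j * gs ! j)}"

text \<open>Hilbert function of S/I for a homogeneous ideal I:
  dim_k (S/I)_k = dim_k S_k - dim_k (I \<inter> S_k) (S_k is finite dimensional).\<close>
definition HF :: "'k::field poly3 set \<Rightarrow> nat \<Rightarrow> nat" where
  "HF I k = vector_space.dim (scale3 :: 'k \<Rightarrow> 'k poly3 \<Rightarrow> 'k poly3) (homog k) - vector_space.dim (scale3 :: 'k \<Rightarrow> 'k poly3 \<Rightarrow> 'k poly3) (I \<inter> homog k)"

end

theory Submission
  imports Defs
begin
abbreviation (input) ks where "ks \<equiv> Poly_Mapping.keys"
abbreviation (input) lk where "lk \<equiv> Poly_Mapping.lookup"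


lemma U3: "(UNIV::3 set) = {0,1,2}"
proof -
  have "card {0,1,2::3} = 3" by simp
  moreover have "card (UNIV::3 set) = 3" by simp
  ultimately have "{0,1,2::3} = UNIV" by (intro card_subset_eq) auto
  then show ?thesis by simp
qed

definition mono :: "nat \<times> nat \<times> nat \<Rightarrow> (3 \<Rightarrow>\<^sub>0 nat)" where
  "mono x = Poly_Mapping.single 0 (fst x) + Poly_Mapping.single 1 (fst (snd x)) + Poly_Mapping.single 2 (snd (snd x))"
definition tri :: "(3 \<Rightarrow>\<^sub>0 nat) \<Rightarrow> nat \<times> nat \<times> nat" where
  "tri m = (lk m 0, lk m 1, lk m 2)"

lemma tri_mono[simp]: "tri (mono x) = x"
  by (cases x) (simp add: tri_def mono_def lookup_add lookup_single)

lemma mono_tri[simp]: "mono (tri m) = m"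
proof (rule poly_mapping_eqI)
  fix i :: 3
  have "i \<in> {0,1,2}" using U3 by blast
  then show "lk (mono (tri m)) i = lk m i"
    by (auto simp add: tri_def mono_def lookup_add lookup_single)
qed

lemma tri_inj: "inj tri" by (rule inj_on_inverseI[where g=mono]) simp

lemma mono_add: "mono (a+a', b+b', c+c') = mono (a,b,c) + mono (a',b',c')"
  by (simp add: mono_def single_add add_ac)

lemma mdeg_tri: "mdeg m = lk m 0 + lk m 1 + lk m 2"
proof -
  have "mdeg m = (\<Sum>i\<in>UNIV. lk m i)"
    unfolding mdeg_def
  proof (rule sum.mono_neutral_left)
    show "\<forall>i\<in>UNIV - ks m. lk m i = 0" by (simp add: in_keys_iff)
  qed auto
  also have "\<dots> = lk m 0 + lk m 1 + lk m 2" unfolding U3 by simp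
  finally show ?thesis .
qed

lemma lookup_scale3: "lk (scale3 c p) m = c * lk p m"
  unfolding scale3_def mult_map_scale_conv_mult[symmetric]
  by (simp add: map.rep_eq when_def)

lemma scale3_single: "scale3 c (Poly_Mapping.single m 1) = Poly_Mapping.single m c"
  by (simp add: scale3_def mult_single)


lemma vs3: "vector_space (scale3 :: 'k::field \<Rightarrow> 'k poly3 \<Rightarrow> 'k poly3)"
  by unfold_locales (simp_all add: poly_mapping_eq_iff fun_eq_iff lookup_scale3 lookup_add distrib_left distrib_right mult.assoc)

lemma expand: "p = (\<Sum>m\<in>ks p. Poly_Mapping.single m (lk p m))"
proof (rule poly_mapping_eqI)
  fix k
  show "lk p k = lk (\<Sum>m\<in>ks p. Poly_Mapping.single m (lk p m)) k"
    unfolding lookup_sum lookup_single when_def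
    by (cases "k \<in> ks p") (auto simp: in_keys_iff)
qed


lemma single_inj: "inj_on (\<lambda>m. Poly_Mapping.single m (1::'k::field)) A"
proof (rule inj_onI)
  fix x y assume "Poly_Mapping.single x (1::'k) = Poly_Mapping.single y 1"
  then have "ks (Poly_Mapping.single x (1::'k)) = ks (Poly_Mapping.single y (1::'k))" by simp
  then show "x = y" by simp
qed

lemma dim_supp:
  assumes fin: "finite A"
  shows "vector_space.dim (scale3::'k::field \<Rightarrow> 'k poly3 \<Rightarrow> 'k poly3) {p::'k poly3. ks p \<subseteq> A} = card A"
proof -
  interpret v: vector_space "scale3 :: 'k \<Rightarrow> 'k poly3 \<Rightarrow> 'k poly3" by (rule vs3)
  let ?s = "\<lambda>m. Poly_Mapping.single m (1::'k)"
  let ?B = "?s ` A"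
  show ?thesis
  proof (rule v.dim_unique[of ?B])
    show "?B \<subseteq> {p. ks p \<subseteq> A}" by auto
    show "{p. ks p \<subseteq> A} \<subseteq> v.span ?B"
    proof
      fix p :: "'k poly3" assume "p \<in> {p. ks p \<subseteq> A}"
      then have sub: "ks p \<subseteq> A" by simp
      have "p = (\<Sum>m\<in>ks p. scale3 (lk p m) (?s m))"
        by (subst expand) (simp add: scale3_single)
      also have "\<dots> \<in> v.span ?B"
        using sub by (intro v.span_sum v.span_scale v.span_base) auto
      finally show "p \<in> v.span ?B" .
    qed
    show "v.independent ?B"
    proof (rule v.independent_if_scalars_zero)
      show "finite ?B" using fin by simp
      fix f x assume sum0: "(\<Sum>x\<in>?B. scale3 (f x) x) = 0" and x: "x \<in> ?B"
      then obtain m where m: "m \<in> A" "x = ?s m" by auto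
      have "(\<Sum>x\<in>?B. scale3 (f x) x) = (\<Sum>m'\<in>A. Poly_Mapping.single m' (f (?s m')))"
        by (subst sum.reindex[OF single_inj]) (simp add: scale3_single)
      then have "0 = lk (\<Sum>m'\<in>A. Poly_Mapping.single m' (f (?s m'))) m"
        using sum0 by simp
      also have "\<dots> = f (?s m)"
        unfolding lookup_sum lookup_single when_def using m(1) fin by simp
      finally show "f x = 0" using m by simp
    qed
    show "card ?B = card A" by (rule card_image[OF single_inj])
  qed
qed


lemma ideal_homog:
  fixes es :: "(3 \<Rightarrow>\<^sub>0 nat) list"
  shows "ideal_gen (map (\<lambda>e. Poly_Mapping.single e (1::'k::field)) es) \<inter> homog t =
    {p. ks p \<subseteq> {m. mdeg m = t \<and> (\<exists>e\<in>set es. \<exists>r. m = e + r)}}"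
    (is "?L = ?R")
proof (rule equalityI)
  show "?L \<subseteq> ?R"
  proof
    fix p :: "'k poly3" assume p: "p \<in> ?L"
    then obtain c where c: "p = (\<Sum>j<length es. c j * Poly_Mapping.single (es!j) 1)"
      by (auto simp: ideal_gen_def)
    have "ks p \<subseteq> {m. mdeg m = t \<and> (\<exists>e\<in>set es. \<exists>r. m = e + r)}"
    proof
      fix m assume m: "m \<in> ks p"
      then have "mdeg m = t" using p by (auto simp: homog_def)
      moreover from m obtain j where j: "j < length es" "m \<in> ks (c j * Poly_Mapping.single (es!j) (1::'k))"
        using keys_sum[of "\<lambda>j. c j * Poly_Mapping.single (es!j) (1::'k)" "{..<length es}"] c by auto
      then obtain a where "m = a + es!j"
        using keys_mult[of "c j" "Poly_Mapping.single (es!j) (1::'k)"] by auto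
      then have "\<exists>e\<in>set es. \<exists>r. m = e + r" using j(1) by (metis add.commute nth_mem)
      ultimately show "m \<in> {m. mdeg m = t \<and> (\<exists>e\<in>set es. \<exists>r. m = e + r)}" by simp
    qed
    then show "p \<in> ?R" by simp
  qed
next
  show "?R \<subseteq> ?L"
  proof
    fix p :: "'k poly3" assume p: "p \<in> ?R"
    then have hom: "p \<in> homog t" by (auto simp: homog_def)
    define J where "J m = (SOME j. j < length es \<and> (\<exists>r. m = es!j + r))" for m
    define R where "R m = (SOME r. m = es!(J m) + r)" for m
    have JR: "J m < length es \<and> m = es!(J m) + R m" if "m \<in> ks p" for m
    proof -
      from that p obtain e r where "e \<in> set es" "m = e + r" by auto
      then obtain j where "j < length es" "m = es!j + r" by (metis in_set_conv_nth)
      then have ex: "\<exists>j. j < length es \<and> (\<exists>r. m = es!j + r)" by blast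
      have "J m < length es \<and> (\<exists>r. m = es!(J m) + r)"
        unfolding J_def by (rule someI_ex[OF ex])
      then show ?thesis unfolding R_def using someI_ex[of "\<lambda>r. m = es!(J m) + r"] by blast
    qed
    have JR1: "J m < length es" if "m \<in> ks p" for m using JR[OF that] by (rule conjunct1)
    have JR2: "m = es!(J m) + R m" if "m \<in> ks p" for m using JR[OF that] by (rule conjunct2)
    define c where "c j = (\<Sum>m\<in>{m \<in> ks p. J m = j}. Poly_Mapping.single (R m) (lk p m))" for j
    have "(\<Sum>j<length es. c j * map (\<lambda>e. Poly_Mapping.single e (1::'k)) es ! j)
        = (\<Sum>j<length es. \<Sum>m\<in>{m \<in> ks p. J m = j}. Poly_Mapping.single m (lk p m))"
    proof (rule sum.cong[OF refl])
      fix j assume j: "j \<in> {..<length es}"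
      have "c j * map (\<lambda>e. Poly_Mapping.single e (1::'k)) es ! j
          = (\<Sum>m\<in>{m \<in> ks p. J m = j}. Poly_Mapping.single (R m + es!j) (lk p m))"
        using j unfolding c_def sum_distrib_right by (simp add: mult_single)
      also have "\<dots> = (\<Sum>m\<in>{m \<in> ks p. J m = j}. Poly_Mapping.single m (lk p m))"
      proof (rule sum.cong[OF refl])
        fix m assume "m \<in> {m \<in> ks p. J m = j}"
        then have "m \<in> ks p" "J m = j" by auto
        then show "Poly_Mapping.single (R m + es!j) (lk p m) = Poly_Mapping.single m (lk p m)"
          using JR2[of m] by (metis add.commute)
      qed
      finally show "c j * map (\<lambda>e. Poly_Mapping.single e (1::'k)) es ! j = (\<Sum>m\<in>{m \<in> ks p. J m = j}. Poly_Mapping.single m (lk p m))" .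
    qed
    also have "\<dots> = (\<Sum>m\<in>ks p. Poly_Mapping.single m (lk p m))"
    proof (rule sum.group)
      show "J ` ks p \<subseteq> {..<length es}" using JR1 by (simp add: image_subset_iff)
    qed auto
    also have "\<dots> = p" by (rule expand[symmetric])
    finally have eq: "p = (\<Sum>j<length (map (\<lambda>e. Poly_Mapping.single e (1::'k)) es). c j * map (\<lambda>e. Poly_Mapping.single e (1::'k)) es ! j)"
      unfolding length_map by (rule sym)
    have "p \<in> ideal_gen (map (\<lambda>e. Poly_Mapping.single e (1::'k)) es)"
      unfolding ideal_gen_def mem_Collect_eq by (rule exI[of _ c]) (rule eq)
    with hom show "p \<in> ?L" by simp
  qed
qed



definition std :: "nat \<Rightarrow> nat \<Rightarrow> (nat \<times> nat \<times> nat) set" where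
  "std d t = {(a,b,c). a+b+c = t \<and> a<d \<and> b<d \<and> c<d \<and> \<not>(d div 2 \<le> a \<and> d - d div 2 \<le> b)}"

lemma std_fin: "finite (std d t)"
proof -
  have "std d t \<subseteq> {..<d} \<times> {..<d} \<times> {..<d}" by (auto simp: std_def)
  then show ?thesis by (rule finite_subset) auto
qed

lemma card2: "card {x, y} \<le> 2"
  by (cases "x = y") simp_all

lemma comb:
  fixes d :: nat
  assumes d5: "d \<ge> 5" and d6: "d \<noteq> 6"
  defines "T \<equiv> (3*d-3) div 2"
  shows "card (std d T) < card (std d (T-1))"
proof -
  define A where "A = {x \<in> std d T. snd (snd x) > 0}"
  define B where "B = {x \<in> std d T. snd (snd x) = 0}"
  define f where "f x = (fst x, fst (snd x), snd (snd x) - 1)" for x :: "nat \<times> nat \<times> nat"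
  define C where "C = (\<lambda>i. (i, T-d-i, d-1)) ` {..T-d}"
  have Tge: "T \<ge> d + 1" and Tlt: "T < 2*d" using d5 unfolding T_def by auto
  have S1: "std d T = A \<union> B" "A \<inter> B = {}" unfolding A_def B_def by auto
  have finA: "finite A" and finB: "finite B" using std_fin[of d T] unfolding A_def B_def by auto
  have injf: "inj_on f A" unfolding A_def f_def by (auto intro!: inj_onI)
  have cardC: "card C = T - d + 1"
    unfolding C_def by (subst card_image) (auto intro!: inj_onI)
  have fA: "f ` A \<subseteq> std d (T-1)" unfolding A_def f_def std_def by auto
  have Csub: "C \<subseteq> std d (T-1)" unfolding C_def std_def using Tge Tlt by auto
  have disj: "f ` A \<inter> C = {}" unfolding A_def f_def C_def std_def by auto
  have "card B < card C"
  proof (cases "even d")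
    case True
    then obtain k where k: "d = 2*k" by blast
    with d5 d6 have k4: "k \<ge> 4" by presburger
    have dk: "d div 2 = k" "d - d div 2 = k" "T = 3*k - 2" using k k4 unfolding T_def by presburger+
    have "B \<subseteq> {(k-1, 2*k-1, 0), (2*k-1, k-1, 0)}"
    proof
      fix x assume xB: "x \<in> B"
      obtain a b c where x: "x = (a,b,c)" by (cases x)
      have h: "a+b+c = T" "a<d" "b<d" "\<not>(d div 2 \<le> a \<and> d - d div 2 \<le> b)" "c = 0"
        using xB unfolding x B_def std_def by simp_all
      have "(a = k-1 \<and> b = 2*k-1) \<or> (a = 2*k-1 \<and> b = k-1)" using h dk k by linarith
      then show "x \<in> {(k-1, 2*k-1, 0), (2*k-1, k-1, 0)}" using x h by auto
    qed
    then have "card B \<le> card {(k-1, 2*k-1, 0::nat), (2*k-1, k-1, 0::nat)}" by (intro card_mono) auto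
    also have "\<dots> \<le> 2" by (rule card2)
    finally have "card B \<le> 2" .
    moreover have "card C \<ge> 3" using cardC dk k k4 by simp
    ultimately show ?thesis by simp
  next
    case False
    then obtain k where k: "d = 2*k+1" using oddE by blast
    with d5 have k2: "k \<ge> 2" by presburger
    have dk: "d div 2 = k" "d - d div 2 = k + 1" "T = 3*k" using k unfolding T_def by presburger+
    have "B \<subseteq> {(2*k, k, 0)}"
    proof
      fix x assume xB: "x \<in> B"
      obtain a b c where x: "x = (a,b,c)" by (cases x)
      have h: "a+b+c = T" "a<d" "b<d" "\<not>(d div 2 \<le> a \<and> d - d div 2 \<le> b)" "c = 0"
        using xB unfolding x B_def std_def by simp_all
      have "a = 2*k \<and> b = k" using h dk k by linarith
      then show "x \<in> {(2*k, k, 0)}" using x h by auto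
    qed
    then have "card B \<le> card {(2*k, k, 0::nat)}" by (intro card_mono) auto
    then have "card B \<le> 1" by simp
    moreover have "card C \<ge> 2" using cardC dk k k2 by simp
    ultimately show ?thesis by simp
  qed
  have "card (std d T) = card A + card B" using S1 finA finB by (simp add: card_Un_disjoint)
  also have "card A = card (f ` A)" using injf by (simp add: card_image)
  also have "card (f ` A) + card B < card (f ` A) + card C" using \<open>card B < card C\<close> by simp
  also have "card (f ` A) + card C = card (f ` A \<union> C)"
    using disj finA by (simp add: card_Un_disjoint C_def)
  also have "\<dots> \<le> card (std d (T-1))" using fA Csub std_fin by (intro card_mono) auto
  finally show ?thesis .
qed


lemma lk_mono: "lk (mono (a,b,c)) 0 = a" "lk (mono (a,b,c)) 1 = b" "lk (mono (a,b,c)) 2 = c"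
  using tri_mono[of "(a,b,c)"] unfolding tri_def by simp_all

lemma mdeg_mono: "mdeg (mono (a,b,c)) = a + b + c"
  by (simp add: mdeg_tri lk_mono)

lemma divides_mono: "(\<exists>r. m = mono (a,b,c) + r) \<longleftrightarrow> a \<le> lk m 0 \<and> b \<le> lk m 1 \<and> c \<le> lk m 2"
proof
  assume "\<exists>r. m = mono (a,b,c) + r"
  then obtain r where r: "m = mono (a,b,c) + r" by blast
  show "a \<le> lk m 0 \<and> b \<le> lk m 1 \<and> c \<le> lk m 2"
    unfolding r lookup_add lk_mono by simp
next
  assume h: "a \<le> lk m 0 \<and> b \<le> lk m 1 \<and> c \<le> lk m 2"
  have "mono (a,b,c) + mono (lk m 0 - a, lk m 1 - b, lk m 2 - c) = mono (a + (lk m 0 - a), b + (lk m 1 - b), c + (lk m 2 - c))"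
    by (rule mono_add[symmetric])
  also have "\<dots> = mono (tri m)" using h unfolding tri_def by simp
  also have "\<dots> = m" by simp
  finally show "\<exists>r. m = mono (a,b,c) + r" by (metis)
qed

lemma tri_image: "tri ` S = {x. mono x \<in> S}"
proof (rule set_eqI)
  fix x
  show "x \<in> tri ` S \<longleftrightarrow> x \<in> {x. mono x \<in> S}"
  proof
    assume "x \<in> tri ` S"
    then obtain m where "m \<in> S" "x = tri m" by blast
    then show "x \<in> {x. mono x \<in> S}" by simp
  next
    assume "x \<in> {x. mono x \<in> S}"
    then have "tri (mono x) \<in> tri ` S" by blast
    then show "x \<in> tri ` S" by simp
  qed
qed

lemma finD: "finite {m :: 3 \<Rightarrow>\<^sub>0 nat. mdeg m = t}"
proof -
  have "{m :: 3 \<Rightarrow>\<^sub>0 nat. mdeg m = t} \<subseteq> mono ` ({..t} \<times> {..t} \<times> {..t})"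
  proof
    fix m :: "3 \<Rightarrow>\<^sub>0 nat" assume "m \<in> {m. mdeg m = t}"
    then have "lk m 0 + lk m 1 + lk m 2 = t" by (simp add: mdeg_tri)
    then have "tri m \<in> {..t} \<times> {..t} \<times> {..t}" unfolding tri_def by auto
    then have "mono (tri m) \<in> mono ` ({..t} \<times> {..t} \<times> {..t})" by (rule imageI)
    then show "m \<in> mono ` ({..t} \<times> {..t} \<times> {..t})" by simp
  qed
  then show ?thesis by (rule finite_subset) simp
qed

lemma HF_std:
  fixes d t :: nat
  defines "es \<equiv> [mono (d,0,0), mono (0,d,0), mono (0,0,d), mono (d div 2, d - d div 2, 0)]"
  shows "HF (ideal_gen (map (\<lambda>e. Poly_Mapping.single e (1::'k::field)) es)) t = card (std d t)"
proof -
  define D where "D = {m :: 3 \<Rightarrow>\<^sub>0 nat. mdeg m = t}"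
  define M where "M = {m. mdeg m = t \<and> (\<exists>e\<in>set es. \<exists>r. m = e + r)}"
  have fD: "finite D" unfolding D_def by (rule finD)
  have MD: "M \<subseteq> D" unfolding M_def D_def by auto
  have fM: "finite M" using fD MD by (rule finite_subset[rotated])
  have hom: "homog t = {p :: 'k poly3. ks p \<subseteq> D}" unfolding homog_def D_def by auto
  have "HF (ideal_gen (map (\<lambda>e. Poly_Mapping.single e (1::'k)) es)) t = card D - card M"
  proof -
    have L: "ideal_gen (map (\<lambda>e. Poly_Mapping.single e (1::'k)) es) \<inter> homog t = {p. ks p \<subseteq> M}"
      unfolding M_def by (rule ideal_homog)
    show ?thesis unfolding HF_def L unfolding hom by (subst dim_supp[OF fD], subst dim_supp[OF fM], rule refl)
  qed
  also have "\<dots> = card (D - M)" using card_Diff_subset[OF fM MD] by simp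
  also have "\<dots> = card (tri ` (D - M))" using tri_inj by (simp add: card_image inj_on_subset)
  also have "tri ` (D - M) = std d t"
  proof -
    have "mono (a,b,c) \<in> D - M \<longleftrightarrow> (a,b,c) \<in> std d t" for a b c
      unfolding D_def M_def std_def es_def
      by (auto simp: mdeg_mono divides_mono lk_mono)
    then show ?thesis unfolding tri_image by auto
  qed
  finally show ?thesis .
qed



lemma var3_pow: "var3 i ^ n = (Poly_Mapping.single (Poly_Mapping.single i n) 1 :: 'k::field poly3)"
  by (induction n) (simp_all add: var3_def mult_single flip: single_add)

theorem lemma5p7:
  fixes d :: nat
  assumes "d \<ge> 5" and "d \<noteq> 6"
  defines "I \<equiv> ideal_gen [var3 0 ^ d, var3 1 ^ d, var3 2 ^ d,
                 var3 0 ^ (d div 2) * var3 1 ^ (d - d div 2) :: 'k::field poly3]"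
  shows "HF I ((3 * d - 3) div 2 - 1) > HF I ((3 * d - 3) div 2)"
proof -
  have I_eq: "I = ideal_gen (map (\<lambda>e. Poly_Mapping.single e (1::'k)) 
      [mono (d,0,0), mono (0,d,0), mono (0,0,d), mono (d div 2, d - d div 2, 0)])"
    unfolding I_def by (simp add: var3_pow mono_def mult_single)
  show ?thesis unfolding I_eq HF_std using comb[OF assms(1,2)] by simp
qed


end
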